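(* Let $X$ be a non-negative, absolutely continuous random variable with finite positive mean and cumulative distribution function $F$, let $2\leqslant m\leqslant n$ be integers, and let $X_1,\ldots,X_n$ be i.i.d. copies of $X$. For $1\leqslant j\leqslant k\leqslant m$ define the extended Gini index estimator $$\widehat{IG}_m(j,k)=\frac{(m-1)!}{(n-1)(n-2)\cdots(n-m+1)}\,\frac{\displaystyle\sum_{1\leqslant i_1<\cdots<i_m\leqslant n}\left[X_{k:\mathbf{i}}-X_{j:\mathbf{i}}\right]}{\displaystyle\sum_{i=1}^n X_i},$$ where for $\mathbf{i}=(i_1,\ldots,i_m)$, $X_{1:\mathbf{i}}\leqslant\cdots\leqslant X_{m:\mathbf{i}}$ are the order statistics of $X_{i_1},\ldots,X_{i_m}$. Let $\mathscr{L}_F(z)=\int_0^\infty e^{-zx}\,{\rm d}F(x)$ be the Laplace transform of $F$. Then, assuming the relevant expectations and improper integrals converge, for any $1\leqslant j\leqslant k\leqslant m$, $$\mathbb{E}[\widehat{IG}_m(j,k)]=\frac{n}{m}\sum_{r=k}^{m}(-1)^{r-k}\binom{r-1}{k-1}\binom{m}{r}\int_0^\infty\int_0^\infty\left\{\mathscr{L}_F^{r}(z)-\mathbb{E}^r\left[\mathds{1}_{\{X\leqslant t\}}e^{-Xz}\right]\right\}{\rm d}t\,\mathscr{L}_F^{n-r}(z)\,{\rm d}z$$ $$-\frac{n}{m}\sum_{s=j}^{m}(-1)^{s-j}\binom{s-1}{j-1}\binom{m}{s}\int_0^\infty\int_0^\infty\left\{\mathscr{L}_F^{s}(z)-\mathbb{E}^s\left[\mathds{1}_{\{X\leqslant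 t\}}e^{-Xz}\right]\right\}{\rm d}t\,\mathscr{L}_F^{n-s}(z)\,{\rm d}z.$$
   Context: $\mathbb{E}^r[\cdot]$ denotes the $r$th power of the expectation, and $\mathds{1}_A$ is the indicator of the event $A$. *)

theory Defs
  imports "HOL-Probability.Probability"
begin

definition ord_stat :: "nat \<Rightarrow> nat set \<Rightarrow> (nat \<Rightarrow> real) \<Rightarrow> real" where
  "ord_stat k I x = sort (map x (sorted_list_of_set I)) ! (k - 1)"

definition IG_hat :: "nat \<Rightarrow> nat \<Rightarrow> nat \<Rightarrow> nat \<Rightarrow> (nat \<Rightarrow> real) \<Rightarrow> real" where
  "IG_hat n m j k x =
     fact (m - 1) / (\<Prod>i\<in>{1..m-1}. real (n - i)) *
     ((\<Sum>I\<in>{I. I \<subseteq> {..<n} \<and> card I = m}. ord_stat k I x - ord_stat j I x)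
      / (\<Sum>i<n. x i))"

definition laplace_tr :: "'a measure \<Rightarrow> ('a \<Rightarrow> real) \<Rightarrow> real \<Rightarrow> real" where
  "laplace_tr M X z = (\<integral>\<omega>. exp (- z * X \<omega>) \<partial>M)"

definition trunc_laplace :: "'a measure \<Rightarrow> ('a \<Rightarrow> real) \<Rightarrow> real \<Rightarrow> real \<Rightarrow> real" where
  "trunc_laplace M X t z = (\<integral>\<omega>. indicator {..t} (X \<omega>) * exp (- X \<omega> * z) \<partial>M)"

end

theory Submission
  imports Defs
begin
lemma alt_binom_sum:
  fixes A L :: real assumes "l \<le> m"
  shows "(\<Sum>r=l..m. (-1)^(r-l) * real (r choose l) * real (m choose r) * A^r * L^(m-r))
       = real (m choose l) * A^l * (L - A)^(m-l)"
proof -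
  have "(\<Sum>r=l..m. (-1)^(r-l) * real (r choose l) * real (m choose r) * A^r * L^(m-r))
      = (\<Sum>r=l..m. real (m choose l) * A^l * (real ((m-l) choose (r-l)) * (-A)^(r-l) * L^((m-l)-(r-l))))"
  proof (rule sum.cong[OF refl])
    fix r assume r: "r \<in> {l..m}"
    have c: "real (m choose r) * real (r choose l) = real (m choose l) * real ((m-l) choose (r-l))"
      using choose_mult[of l r m] r by (simp flip: of_nat_mult)
    have p: "A^r = A^l * A^(r-l)" using r by (simp flip: power_add)
    have q: "m - r = (m-l)-(r-l)" using r by simp
    show "(-1)^(r-l) * real (r choose l) * real (m choose r) * A^r * L^(m-r)
      = real (m choose l) * A^l * (real ((m-l) choose (r-l)) * (-A)^(r-l) * L^((m-l)-(r-l)))"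
      using c by (simp add: p q power_minus[of A] mult_ac)
  qed
  also have "\<dots> = real (m choose l) * A^l * (\<Sum>r=l..m. real ((m-l) choose (r-l)) * (-A)^(r-l) * L^((m-l)-(r-l)))"
    by (simp add: sum_distrib_left)
  also have "(\<Sum>r=l..m. real ((m-l) choose (r-l)) * (-A)^(r-l) * L^((m-l)-(r-l)))
      = (\<Sum>s=0..m-l. real ((m-l) choose s) * (-A)^s * L^((m-l)-s))"
    using sum.shift_bounds_cl_nat_ivl[of "\<lambda>r. real ((m-l) choose (r-l)) * (-A)^(r-l) * L^((m-l)-(r-l))" 0 l "m-l"]
    assms by simp
  also have "\<dots> = (L - A)^(m-l)"
    using binomial_ring[of "-A" L "m-l"] by (simp add: atLeast0AtMost)
  finally show ?thesis .
qed

lemma sum_split_first: "l \<le> (m::nat) \<Longrightarrow> sum f {l..m} = f l + sum f {l+1..m}"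
  by (simp add: sum.atLeast_Suc_atMost)

lemma choose_pascal_real: "1 \<le> l \<Longrightarrow> l \<le> (r::nat) \<Longrightarrow>
   real ((r-1) choose (l-1)) = real (r choose l) - real ((r-1) choose l)"
  using choose_reduce_nat[of r l] by (simp add: of_nat_add[symmetric] del: of_nat_add)

lemma tail_step_spl:
  fixes A L :: real assumes "1 \<le> l"
  shows "(\<Sum>r=l..m. (-1)^(r-l) * real ((r-1) choose (l-1)) * real (m choose r) * A^r * L^(m-r))
     = (\<Sum>r=l..m. (-1)^(r-l) * real (r choose l) * real (m choose r) * A^r * L^(m-r))
     - (\<Sum>r=l..m. (-1)^(r-l) * real ((r-1) choose l) * real (m choose r) * A^r * L^(m-r))"
proof -
  have "(-1)^(r-l) * real ((r-1) choose (l-1)) * real (m choose r) * A^r * L^(m-r)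
       = (-1)^(r-l) * real (r choose l) * real (m choose r) * A^r * L^(m-r) - (-1)^(r-l) * real ((r-1) choose l) * real (m choose r) * A^r * L^(m-r)"
    if r: "r \<in> {l..m}" for r
  proof -
    have e: "real ((r-1) choose (l-1)) = real (r choose l) - real ((r-1) choose l)"
      using choose_pascal_real[OF assms] r by auto
    show ?thesis unfolding e by (simp add: algebra_simps)
  qed
  then show ?thesis unfolding sum_subtractf[symmetric] by (intro sum.cong) auto
qed

lemma tail_step_second:
  fixes A L :: real assumes "1 \<le> l" "l \<le> m"
  shows "(\<Sum>r=l..m. (-1)^(r-l) * real ((r-1) choose l) * real (m choose r) * A^r * L^(m-r))
     = - (\<Sum>r=l+1..m. (-1)^(r-(l+1)) * real ((r-1) choose l) * real (m choose r) * A^r * L^(m-r))"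
proof -
  have "(\<Sum>r=l..m. (-1)^(r-l) * real ((r-1) choose l) * real (m choose r) * A^r * L^(m-r))
     = (\<Sum>r=l+1..m. (-1)^(r-l) * real ((r-1) choose l) * real (m choose r) * A^r * L^(m-r))"
    using assms by (subst sum.atLeast_Suc_atMost) simp_all
  also have "\<dots> = (\<Sum>r=l+1..m. - ((-1)^(r-(l+1)) * real ((r-1) choose l) * real (m choose r) * A^r * L^(m-r)))"
  proof (rule sum.cong[OF refl])
    fix r assume "r \<in> {l+1..m}"
    then have "r - l = Suc (r - (l+1))" by auto
    then show "(-1)^(r-l) * real ((r-1) choose l) * real (m choose r) * A^r * L^(m-r)
        = - ((-1)^(r-(l+1)) * real ((r-1) choose l) * real (m choose r) * A^r * L^(m-r))" by simp
  qed
  finally show ?thesis by (simp add: sum_negf)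
qed

lemma tail_Q_aux:
  fixes A B :: real
  shows "\<forall>l. m + 1 - l = d \<longrightarrow> 1 \<le> l \<longrightarrow> l \<le> m + 1 \<longrightarrow> (\<Sum>i=l..m. real (m choose i) * A^i * B^(m-i))
       = (\<Sum>r=l..m. (-1)^(r-l) * real ((r-1) choose (l-1)) * real (m choose r) * A^r * (A+B)^(m-r))"
proof (induction d)
  case 0
  show ?case
  proof (intro allI impI)
    fix l assume "m + 1 - l = 0" "1 \<le> l" "l \<le> m + 1"
    then have "m < l" by linarith
    then show "(\<Sum>i=l..m. real (m choose i) * A^i * B^(m-i))
       = (\<Sum>r=l..m. (-1)^(r-l) * real ((r-1) choose (l-1)) * real (m choose r) * A^r * (A+B)^(m-r))" by simp
  qed
next
  case (Suc d)
  show ?case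
  proof (intro allI impI)
    fix l assume h: "m + 1 - l = Suc d" "1 \<le> l" "l \<le> m + 1"
    have lm: "l \<le> m" using h by linarith
    have dd: "m + 1 - (l + 1) = d" using h by linarith
    have IH: "(\<Sum>i=l+1..m. real (m choose i) * A^i * B^(m-i))
       = (\<Sum>r=l+1..m. (-1)^(r-(l+1)) * real ((r+1-1-1) choose (l+1-1)) * real (m choose r) * A^r * (A+B)^(m-r))"
      using Suc.IH dd lm by auto
    have IH': "(\<Sum>i=l+1..m. real (m choose i) * A^i * B^(m-i))
       = (\<Sum>r=l+1..m. (-1)^(r-(l+1)) * real ((r-1) choose l) * real (m choose r) * A^r * (A+B)^(m-r))"
      using IH by simp
    have Q: "(\<Sum>i=l..m. real (m choose i) * A^i * B^(m-i)) = real (m choose l) * A^l * B^(m-l)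
           + (\<Sum>i=l+1..m. real (m choose i) * A^i * B^(m-i))"
      by (rule sum_split_first[OF lm])
    have ab: "real (m choose l) * A ^ l * (A + B - A) ^ (m - l) = real (m choose l) * A^l * B^(m-l)" by simp
    show "(\<Sum>i=l..m. real (m choose i) * A^i * B^(m-i))
       = (\<Sum>r=l..m. (-1)^(r-l) * real ((r-1) choose (l-1)) * real (m choose r) * A^r * (A+B)^(m-r))"
      unfolding Q tail_step_spl[OF h(2)] tail_step_second[OF h(2) lm] IH'[symmetric] alt_binom_sum[OF lm] ab
      by simp
  qed
qed

lemma tail_Q:
  fixes A B :: real assumes "1 \<le> l" "l \<le> m + 1"
  shows "(\<Sum>i=l..m. real (m choose i) * A^i * B^(m-i))
       = (\<Sum>r=l..m. (-1)^(r-l) * real ((r-1) choose (l-1)) * real (m choose r) * A^r * (A+B)^(m-r))"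
  using tail_Q_aux[of m "m + 1 - l" A B] assms by blast

lemma tail_identity:
  fixes A B :: real assumes "1 \<le> l" "l \<le> m"
  shows "(\<Sum>i<l. real (m choose i) * A^i * B^(m-i))
       = (\<Sum>r=l..m. (-1)^(r-l) * real ((r-1) choose (l-1)) * real (m choose r) * (((A+B)^r - A^r) * (A+B)^(m-r)))"
proof -
  define c where "c r = (-1)^(r-l) * real ((r-1) choose (l-1)) * real (m choose r)" for r
  have one: "(\<Sum>r=l..m. c r) = 1"
  proof -
    have "(\<Sum>i=l..m. real (m choose i) * 1^i * (0::real)^(m-i)) = (\<Sum>i=l..m. (if i = m then 1 else 0))"
      by (rule sum.cong) auto
    also have "\<dots> = 1" using assms by simp
    finally show ?thesis using tail_Q[of l m 1 0] assms by (simp add: c_def)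
  qed
  have full: "(\<Sum>i\<le>m. real (m choose i) * A^i * B^(m-i)) = (A+B)^m"
    using binomial_ring[of A B m] by simp
  have splitsum: "(\<Sum>i\<le>m. real (m choose i) * A^i * B^(m-i)) = (\<Sum>i<l. real (m choose i) * A^i * B^(m-i))
      + (\<Sum>i=l..m. real (m choose i) * A^i * B^(m-i))"
  proof -
    have "{..m} = {..<l} \<union> {l..m}" using assms by auto
    then show ?thesis by (simp add: sum.union_disjoint ivl_disj_int)
  qed
  have "(\<Sum>r=l..m. c r * (((A+B)^r - A^r) * (A+B)^(m-r)))
      = (\<Sum>r=l..m. c r * (A+B)^m) - (\<Sum>r=l..m. c r * A^r * (A+B)^(m-r))"
  proof -
    have "\<And>r. r \<in> {l..m} \<Longrightarrow> c r * (((A+B)^r - A^r) * (A+B)^(m-r)) = c r * (A+B)^m - c r * A^r * (A+B)^(m-r)"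
      by (auto simp: algebra_simps simp flip: power_add)
    then show ?thesis unfolding sum_subtractf[symmetric] by (intro sum.cong) auto
  qed
  also have "\<dots> = (A+B)^m - (\<Sum>i=l..m. real (m choose i) * A^i * B^(m-i))"
  proof -
    have e1: "(\<Sum>r=l..m. c r * (A+B)^m) = (A+B)^m" using one by (simp only: sum_distrib_right[symmetric])
    have e2: "(\<Sum>r=l..m. c r * A^r * (A+B)^(m-r)) = (\<Sum>i=l..m. real (m choose i) * A^i * B^(m-i))"
      unfolding c_def by (rule tail_Q[of l m A B, symmetric]) (use assms in simp_all)
    show ?thesis unfolding e1 e2 ..
  qed
  finally have fin: "(\<Sum>r=l..m. c r * (((A+B)^r - A^r) * (A+B)^(m-r))) = (A+B)^m - (\<Sum>i=l..m. real (m choose i) * A^i * B^(m-i))" .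
  have eqc: "(\<Sum>r=l..m. (-1)^(r-l) * real ((r-1) choose (l-1)) * real (m choose r) * (((A+B)^r - A^r) * (A+B)^(m-r)))
     = (\<Sum>r=l..m. c r * (((A+B)^r - A^r) * (A+B)^(m-r)))" unfolding c_def by (rule refl)
  have gen: "\<And>a b c d::real. a = b + c \<Longrightarrow> a = d \<Longrightarrow> b = d - c" by simp
  show ?thesis unfolding eqc fin by (rule gen[OF splitsum full])
qed

lemma card_filter_sort:
  fixes x :: "nat \<Rightarrow> real"
  assumes "finite I"
  shows "card {i\<in>I. x i \<le> t} = length (filter (\<lambda>v. v \<le> t) (sort (map x (sorted_list_of_set I))))"
proof -
  have "length (filter (\<lambda>v. v \<le> t) (sort (map x (sorted_list_of_set I))))
      = size (filter_mset (\<lambda>v. v \<le> t) (mset (sort (map x (sorted_list_of_set I)))))"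
    by (metis mset_filter size_mset)
  also have "\<dots> = size (filter_mset (\<lambda>v. v \<le> t) (mset (map x (sorted_list_of_set I))))" by simp
  also have "\<dots> = length (filter (\<lambda>v. v \<le> t) (map x (sorted_list_of_set I)))"
    by (metis mset_filter size_mset)
  also have "\<dots> = length (filter (\<lambda>i. x i \<le> t) (sorted_list_of_set I))"
    by (simp add: filter_map comp_def)
  also have "\<dots> = card ({i. x i \<le> t} \<inter> I)"
    using assms by (simp add: distinct_length_filter)
  finally show ?thesis by (simp add: Collect_conj_eq Int_commute)
qed

lemma ord_stat_le_iff:
  fixes x :: "nat \<Rightarrow> real"
  assumes "finite I" "1 \<le> l" "l \<le> card I"
  shows "ord_stat l I x \<le> t \<longleftrightarrow> l \<le> card {i\<in>I. x i \<le> t}"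
proof -
  define xs where "xs = sort (map x (sorted_list_of_set I))"
  have len: "length xs = card I" using assms by (simp add: xs_def)
  have srt: "sorted xs" by (simp add: xs_def)
  have c: "card {i\<in>I. x i \<le> t} = card {p. p < length xs \<and> xs ! p \<le> t}"
    using card_filter_sort[OF assms(1), of x t] by (simp add: xs_def length_filter_conv_card)
  have o: "ord_stat l I x = xs ! (l - 1)" by (simp add: ord_stat_def xs_def)
  show ?thesis
  proof
    assume h: "ord_stat l I x \<le> t"
    have "{..<l} \<subseteq> {p. p < length xs \<and> xs ! p \<le> t}"
    proof
      fix p assume "p \<in> {..<l}"
      then have "p \<le> l - 1" "l - 1 < length xs" using assms len by auto
      then have "xs ! p \<le> xs ! (l-1)" using sorted_nth_mono[OF srt] by blast
      then show "p \<in> {p. p < length xs \<and> xs ! p \<le> t}" using h o \<open>p \<le> l - 1\<close> \<open>l - 1 < length xs\<close> by auto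
    qed
    then have "card {..<l} \<le> card {p. p < length xs \<and> xs ! p \<le> t}"
      by (rule card_mono[rotated]) auto
    then show "l \<le> card {i\<in>I. x i \<le> t}" using c by simp
  next
    assume h: "l \<le> card {i\<in>I. x i \<le> t}"
    show "ord_stat l I x \<le> t"
    proof (rule ccontr)
      assume "\<not> ord_stat l I x \<le> t"
      then have gt: "xs ! (l-1) > t" using o by simp
      have "{p. p < length xs \<and> xs ! p \<le> t} \<subseteq> {..<l-1}"
      proof
        fix p assume p: "p \<in> {p. p < length xs \<and> xs ! p \<le> t}"
        show "p \<in> {..<l-1}"
        proof (rule ccontr)
          assume "p \<notin> {..<l-1}"
          then have "l - 1 \<le> p" by simp
          then have "xs ! (l-1) \<le> xs ! p" using sorted_nth_mono[OF srt] p by blast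
          then show False using gt p by simp
        qed
      qed
      then have "card {p. p < length xs \<and> xs ! p \<le> t} \<le> l - 1"
        by (metis card_lessThan card_mono finite_lessThan)
      then show False using h c assms by simp
    qed
  qed
qed

lemma ord_stat_mem:
  fixes x :: "nat \<Rightarrow> real"
  assumes "finite I" "1 \<le> l" "l \<le> card I"
  shows "ord_stat l I x \<in> x ` I"
proof -
  define xs where "xs = sort (map x (sorted_list_of_set I))"
  have len: "length xs = card I" using assms by (simp add: xs_def)
  have "xs ! (l-1) \<in> set xs" using len assms by simp
  also have "set xs = x ` I" using assms by (simp add: xs_def)
  finally show ?thesis by (simp add: ord_stat_def xs_def)
qed

lemma sum_subsets_by_card:
  fixes f :: "nat \<Rightarrow> real"
  assumes "finite I"
  shows "(\<Sum>J\<in>{J. J \<subseteq> I \<and> card J < l}. f (card J)) = (\<Sum>i<l. real (card I choose i) * f i)"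
proof -
  have fin: "finite {J. J \<subseteq> I \<and> card J < l}" using assms by simp
  have "(\<Sum>J\<in>{J. J \<subseteq> I \<and> card J < l}. f (card J))
     = (\<Sum>i<l. \<Sum>J\<in>{J. J \<in> {J. J \<subseteq> I \<and> card J < l} \<and> card J = i}. f (card J))"
    by (rule sum.group[symmetric]) (use fin in auto)
  also have "\<dots> = (\<Sum>i<l. real (card I choose i) * f i)"
  proof (rule sum.cong[OF refl])
    fix i assume "i \<in> {..<l}"
    then have eq: "{J. J \<in> {J. J \<subseteq> I \<and> card J < l} \<and> card J = i} = {J. J \<subseteq> I \<and> card J = i}" by auto
    have "(\<Sum>J\<in>{J. J \<subseteq> I \<and> card J = i}. f (card J)) = (\<Sum>J\<in>{J. J \<subseteq> I \<and> card J = i}. f i)"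
      by (rule sum.cong) auto
    also have "\<dots> = real (card I choose i) * f i" using n_subsets[OF assms, of i] by simp
    finally show "(\<Sum>J\<in>{J. J \<in> {J. J \<subseteq> I \<and> card J < l} \<and> card J = i}. f (card J)) = real (card I choose i) * f i"
      unfolding eq .
  qed
  finally show ?thesis .
qed

definition indJ :: "nat set \<Rightarrow> nat set \<Rightarrow> real \<Rightarrow> nat \<Rightarrow> real \<Rightarrow> real" where
  "indJ I J t i v = (if i \<in> J then indicator {..t} v else if i \<in> I then 1 - indicator {..t} v else 1)"

lemma prod_indJ:
  fixes x :: "nat \<Rightarrow> real"
  assumes "finite N" "I \<subseteq> N" "J \<subseteq> I"
  shows "(\<Prod>i\<in>N. indJ I J t i (x i)) = (if J = {i\<in>I. x i \<le> t} then 1 else 0)"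
proof (cases "J = {i\<in>I. x i \<le> t}")
  case True
  have "\<And>i. i \<in> N \<Longrightarrow> indJ I J t i (x i) = 1" using True by (auto simp: indJ_def indicator_def)
  then show ?thesis using True by simp
next
  case False
  then obtain i where i: "i \<in> I" "(i \<in> J) \<noteq> (x i \<le> t)" using assms(3) by auto
  then have "indJ I J t i (x i) = 0" by (auto simp: indJ_def indicator_def)
  moreover have "i \<in> N" using i assms by auto
  ultimately show ?thesis using False assms(1) by (metis prod_zero_iff)
qed

lemma indicator_decomp:
  fixes x :: "nat \<Rightarrow> real"
  assumes "finite N" "I \<subseteq> N"
  shows "(if card {i\<in>I. x i \<le> t} < l then 1 else 0)
      = (\<Sum>J\<in>{J. J \<subseteq> I \<and> card J < l}. \<Prod>i\<in>N. indJ I J t i (x i))"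
proof -
  have fI: "finite I" using assms finite_subset by blast
  have fin: "finite {J. J \<subseteq> I \<and> card J < l}" using fI by simp
  have "(\<Sum>J\<in>{J. J \<subseteq> I \<and> card J < l}. \<Prod>i\<in>N. indJ I J t i (x i))
      = (\<Sum>J\<in>{J. J \<subseteq> I \<and> card J < l}. if J = {i\<in>I. x i \<le> t} then 1 else 0)"
    by (rule sum.cong) (use prod_indJ[OF assms] in auto)
  also have "\<dots> = (if {i\<in>I. x i \<le> t} \<in> {J. J \<subseteq> I \<and> card J < l} then 1 else 0)"
    using sum.delta[OF fin, of "{i\<in>I. x i \<le> t}" "\<lambda>_. (1::real)"] by simp
  finally show ?thesis by auto
qed

locale gsetup = prob_space M for M :: "'a measure" +
  fixes X :: "'a \<Rightarrow> real" and Xs :: "nat \<Rightarrow> 'a \<Rightarrow> real" and n m j :: nat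
  assumes X_meas: "X \<in> borel_measurable M"
    and X_nn: "AE \<omega> in M. X \<omega> \<ge> 0"
    and X_ac: "absolutely_continuous lborel (distr M borel X)"
    and m2: "2 \<le> m" and mn: "m \<le> n"
    and Xs_meas: "\<And>i. i < n \<Longrightarrow> Xs i \<in> borel_measurable M"
    and Xs_distr: "\<And>i. i < n \<Longrightarrow> distr M borel (Xs i) = distr M borel X"
    and indep: "indep_vars (\<lambda>_. borel) Xs {..<n}"
    and j1: "1 \<le> j" and jm: "j \<le> m"
    and int_t: "\<And>r z. r \<in> {j..m} \<Longrightarrow> z > 0 \<Longrightarrow>
           set_integrable lborel {0..} (\<lambda>t. laplace_tr M X z ^ r - trunc_laplace M X t z ^ r)"
    and int_z: "\<And>r. r \<in> {j..m} \<Longrightarrow>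
           set_integrable lborel {0<..}
             (\<lambda>z. (LBINT t:{0..}. laplace_tr M X z ^ r - trunc_laplace M X t z ^ r)
                   * laplace_tr M X z ^ (n - r))"
begin

lemma transfer:
  fixes h :: "real \<Rightarrow> real"
  assumes "i < n" "h \<in> borel_measurable borel"
  shows "(\<integral>\<omega>. h (Xs i \<omega>) \<partial>M) = (\<integral>\<omega>. h (X \<omega>) \<partial>M)"
proof -
  have "(\<integral>\<omega>. h (Xs i \<omega>) \<partial>M) = integral\<^sup>L (distr M borel (Xs i)) h"
    using integral_distr[OF Xs_meas[OF assms(1)] assms(2)] by simp
  also have "\<dots> = integral\<^sup>L (distr M borel X) h" using Xs_distr[OF assms(1)] by simp
  also have "\<dots> = (\<integral>\<omega>. h (X \<omega>) \<partial>M)" using integral_distr[OF X_meas assms(2)] by simp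
  finally show ?thesis .
qed

lemma AE_Xs_nn: "AE \<omega> in M. \<forall>i\<in>{..<n}. Xs i \<omega> \<ge> 0"
proof (rule AE_finite_allI)
  fix i assume i: "i \<in> {..<n}"
  have "AE x in distr M borel X. 0 \<le> x"
    using X_nn X_meas by (subst AE_distr_iff) auto
  moreover have e: "distr M borel (Xs i) = distr M borel X" using Xs_distr i by auto
  ultimately have "AE x in distr M borel (Xs i). 0 \<le> x" by metis
  then show "AE \<omega> in M. Xs i \<omega> \<ge> 0" using Xs_meas i by (subst (asm) AE_distr_iff) auto
qed simp

lemma AE_Xs_nz: "AE \<omega> in M. \<forall>i\<in>{..<n}. Xs i \<omega> \<noteq> 0"
proof (rule AE_finite_allI)
  fix i assume i: "i \<in> {..<n}"
  have "AE x in lborel. x \<noteq> (0::real)" by (rule AE_lborel_singleton)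
  moreover have "sets (distr M borel X) = sets lborel" by simp
  ultimately have "AE x in distr M borel X. x \<noteq> 0"
    using absolutely_continuous_AE[OF _ X_ac] by blast
  moreover have e: "distr M borel (Xs i) = distr M borel X" using Xs_distr i by auto
  ultimately have "AE x in distr M borel (Xs i). x \<noteq> 0" by metis
  then show "AE \<omega> in M. Xs i \<omega> \<noteq> 0" using Xs_meas i by (subst (asm) AE_distr_iff) auto
qed simp

definition S :: "'a \<Rightarrow> real" where "S \<omega> = (\<Sum>i<n. Xs i \<omega>)"

lemma S_meas[measurable]: "S \<in> borel_measurable M"
  unfolding S_def by (rule borel_measurable_sum) (use Xs_meas in auto)

lemma n_pos: "0 < n" using m2 mn by simp

lemma AE_good: "AE \<omega> in M. (\<forall>i\<in>{..<n}. Xs i \<omega> \<ge> 0) \<and> S \<omega> > 0"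
  using AE_Xs_nn AE_Xs_nz
proof eventually_elim
  case (elim \<omega>)
  have "0 < Xs 0 \<omega>" using elim n_pos by (metis lessThan_iff order_le_less)
  also have "Xs 0 \<omega> \<le> S \<omega>" unfolding S_def
    using elim n_pos by (intro member_le_sum) auto
  finally show ?case using elim by simp
qed

definition Lz :: "real \<Rightarrow> real" where "Lz z = laplace_tr M X z"
definition At :: "real \<Rightarrow> real \<Rightarrow> real" where "At t z = trunc_laplace M X t z"

lemma bounded_integrable:
  assumes "f \<in> borel_measurable M" "AE \<omega> in M. \<bar>f \<omega>\<bar> \<le> 1"
  shows "integrable M (f :: 'a \<Rightarrow> real)"
  using assms by (intro integrable_const_bound[where B=1]) auto

lemma exp_le1: "0 < z \<Longrightarrow> 0 \<le> (v::real) \<Longrightarrow> exp (- z * v) \<le> 1"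
  by simp

lemma At_nonneg: "0 \<le> At t z"
  unfolding At_def trunc_laplace_def by (intro integral_nonneg_AE) (auto simp: indicator_def)

lemma LA_eq: assumes "0 < z"
  shows "Lz z - At t z = (\<integral>\<omega>. (1 - indicator {..t} (X \<omega>)) * exp (- X \<omega> * z) \<partial>M)"
proof -
  have i1: "integrable M (\<lambda>\<omega>. exp (- z * X \<omega>))"
    using X_nn assms by (intro bounded_integrable) (use X_meas in measurable, auto elim!: eventually_mono)
  have i2: "integrable M (\<lambda>\<omega>. indicator {..t} (X \<omega>) * exp (- X \<omega> * z))"
    using X_nn assms by (intro bounded_integrable)
      (use X_meas in measurable, auto simp: mult.commute[of _ z] indicator_def elim!: eventually_mono)
  have "Lz z - At t z = (\<integral>\<omega>. exp (- z * X \<omega>) - indicator {..t} (X \<omega>) * exp (- X \<omega> * z) \<partial>M)"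
    unfolding Lz_def At_def laplace_tr_def trunc_laplace_def using i1 i2 by (simp add: integral_diff)
  also have "\<dots> = (\<integral>\<omega>. (1 - indicator {..t} (X \<omega>)) * exp (- X \<omega> * z) \<partial>M)"
    by (rule Bochner_Integration.integral_cong) (auto simp: algebra_simps)
  finally show ?thesis .
qed

lemma LA_nonneg: "0 < z \<Longrightarrow> 0 \<le> Lz z - At t z"
  unfolding LA_eq by (intro integral_nonneg_AE) (auto simp: indicator_def)

lemma Lz_nonneg: "0 \<le> Lz z"
  unfolding Lz_def laplace_tr_def by (intro integral_nonneg_AE) auto

definition gJ :: "nat set \<Rightarrow> nat set \<Rightarrow> real \<Rightarrow> real \<Rightarrow> nat \<Rightarrow> real \<Rightarrow> real" where
  "gJ I J t z i v = indJ I J t i v * exp (- z * v)"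

lemma gJ_meas[measurable]: "gJ I J t z i \<in> borel_measurable borel"
  unfolding gJ_def indJ_def by measurable

lemma gJ_bound: "0 < z \<Longrightarrow> 0 \<le> v \<Longrightarrow> \<bar>gJ I J t z i v\<bar> \<le> 1"
  unfolding gJ_def indJ_def by (auto simp: indicator_def abs_mult mult_le_one)

lemma gJ_exp:
  assumes "i < n" "0 < z"
  shows "(\<integral>\<omega>. gJ I J t z i (Xs i \<omega>) \<partial>M) = (if i \<in> J then At t z else if i \<in> I then Lz z - At t z else Lz z)"
proof -
  have "(\<integral>\<omega>. gJ I J t z i (Xs i \<omega>) \<partial>M) = (\<integral>\<omega>. gJ I J t z i (X \<omega>) \<partial>M)"
    by (rule transfer[OF assms(1)]) simp
  also have "\<dots> = (if i \<in> J then At t z else if i \<in> I then Lz z - At t z else Lz z)"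
    unfolding LA_eq[OF assms(2)]
    by (auto simp: gJ_def indJ_def At_def Lz_def trunc_laplace_def laplace_tr_def mult.commute[of z])
  finally show ?thesis .
qed

lemma prod_cases:
  fixes a b c :: real
  assumes "J \<subseteq> I" "I \<subseteq> {..<n}"
  shows "(\<Prod>i<n. if i \<in> J then a else if i \<in> I then b else c) = a ^ card J * b ^ (card I - card J) * c ^ (n - card I)"
proof -
  let ?f = "\<lambda>i. if i \<in> J then a else if i \<in> I then b else c"
  have fI: "finite I" using assms finite_subset by blast
  have fJ: "finite J" using assms fI finite_subset by blast
  have "(\<Prod>i<n. ?f i) = prod ?f ({..<n} - I) * prod ?f I"
    by (rule prod.subset_diff[OF assms(2)]) simp
  also have "prod ?f ({..<n} - I) = c ^ (n - card I)"
    using assms fI by (subst prod.cong[OF refl, of _ _ "\<lambda>_. c"]) (auto simp: card_Diff_subset)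
  also have "prod ?f I = prod ?f (I - J) * prod ?f J"
    by (rule prod.subset_diff[OF assms(1) fI])
  also have "prod ?f (I - J) = b ^ (card I - card J)"
    using assms fJ by (subst prod.cong[OF refl, of _ _ "\<lambda>_. b"]) (auto simp: card_Diff_subset)
  also have "prod ?f J = a ^ card J"
    by (subst prod.cong[OF refl, of _ _ "\<lambda>_. a"]) auto
  finally show ?thesis by (simp add: mult_ac)
qed

lemma prod_exp:
  assumes "J \<subseteq> I" "I \<subseteq> {..<n}" "0 < z"
  shows "(\<integral>\<omega>. (\<Prod>i<n. gJ I J t z i (Xs i \<omega>)) \<partial>M)
     = At t z ^ card J * (Lz z - At t z) ^ (card I - card J) * Lz z ^ (n - card I)"
    and "integrable M (\<lambda>\<omega>. \<Prod>i<n. gJ I J t z i (Xs i \<omega>))"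
proof -
  have ind: "indep_vars (\<lambda>_. borel) (\<lambda>i \<omega>. gJ I J t z i (Xs i \<omega>)) {..<n}"
    by (rule indep_vars_compose2[OF indep]) simp
  have int: "integrable M (\<lambda>\<omega>. gJ I J t z i (Xs i \<omega>))" if "i \<in> {..<n}" for i
  proof (rule bounded_integrable)
    show "(\<lambda>\<omega>. gJ I J t z i (Xs i \<omega>)) \<in> borel_measurable M"
      using Xs_meas that by (intro measurable_compose[OF _ gJ_meas]) auto
    show "AE \<omega> in M. \<bar>gJ I J t z i (Xs i \<omega>)\<bar> \<le> 1"
      using AE_Xs_nn by eventually_elim (use that assms(3) in \<open>auto intro: gJ_bound\<close>)
  qed
  show "integrable M (\<lambda>\<omega>. \<Prod>i<n. gJ I J t z i (Xs i \<omega>))"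
    by (rule indep_vars_integrable[OF _ ind int]) auto
  have "(\<integral>\<omega>. (\<Prod>i<n. gJ I J t z i (Xs i \<omega>)) \<partial>M) = (\<Prod>i<n. \<integral>\<omega>. gJ I J t z i (Xs i \<omega>) \<partial>M)"
    by (rule indep_vars_lebesgue_integral[OF _ ind int]) auto
  also have "\<dots> = (\<Prod>i<n. if i \<in> J then At t z else if i \<in> I then Lz z - At t z else Lz z)"
    using gJ_exp assms by (intro prod.cong) auto
  also have "\<dots> = At t z ^ card J * (Lz z - At t z) ^ (card I - card J) * Lz z ^ (n - card I)"
    by (rule prod_cases[OF assms(1,2)])
  finally show "(\<integral>\<omega>. (\<Prod>i<n. gJ I J t z i (Xs i \<omega>)) \<partial>M)
     = At t z ^ card J * (Lz z - At t z) ^ (card I - card J) * Lz z ^ (n - card I)" .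
qed

definition OS :: "nat \<Rightarrow> nat set \<Rightarrow> 'a \<Rightarrow> real" where
  "OS l I \<omega> = ord_stat l I (\<lambda>i. Xs i \<omega>)"

lemma card_ind_meas:
  assumes "I \<subseteq> {..<n}"
  shows "(\<lambda>\<omega>. real (card {i\<in>I. Xs i \<omega> \<le> a})) \<in> borel_measurable M"
proof -
  have fI: "finite I" using assms finite_subset by blast
  have "(\<lambda>\<omega>. (\<Sum>i\<in>I. indicator {..a} (Xs i \<omega>) :: real)) \<in> borel_measurable M"
    using assms Xs_meas by (intro borel_measurable_sum) auto
  moreover have "real (card {i\<in>I. Xs i \<omega> \<le> a}) = (\<Sum>i\<in>I. indicator {..a} (Xs i \<omega>) :: real)" for \<omega>
  proof -
    have "real (card {i\<in>I. Xs i \<omega> \<le> a}) = (\<Sum>i\<in>{i\<in>I. Xs i \<omega> \<le> a}. 1)" by simp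
    also have "\<dots> = (\<Sum>i\<in>I. if Xs i \<omega> \<le> a then 1 else 0)" by (rule sum.inter_filter[OF fI])
    also have "\<dots> = (\<Sum>i\<in>I. indicator {..a} (Xs i \<omega>))" by (auto simp: indicator_def intro!: sum.cong)
    finally show ?thesis .
  qed
  ultimately show ?thesis by simp
qed

lemma OS_meas:
  assumes "I \<subseteq> {..<n}" "1 \<le> l" "l \<le> card I"
  shows "OS l I \<in> borel_measurable M"
proof -
  have fI: "finite I" using assms finite_subset by blast
  show ?thesis
  unfolding borel_measurable_iff_le
  proof
    fix a
    have "{w \<in> space M. OS l I w \<le> a} = {w \<in> space M. real l \<le> real (card {i\<in>I. Xs i w \<le> a})}"
      unfolding OS_def using ord_stat_le_iff[OF fI assms(2,3)] by auto
    also have "\<dots> \<in> sets M"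
      using card_ind_meas[OF assms(1), of a] by measurable
    finally show "{w \<in> space M. OS l I w \<le> a} \<in> sets M" .
  qed
qed

end

context gsetup begin

lemma pointwise_decomp:
  assumes I: "I \<subseteq> {..<n}" "1 \<le> l" "l \<le> card I"
  shows "(if t < OS l I \<omega> then 1 else 0) * exp (- z * S \<omega>)
     = (\<Sum>J\<in>{J. J \<subseteq> I \<and> card J < l}. \<Prod>i<n. gJ I J t z i (Xs i \<omega>))"
proof -
  have fI: "finite I" using I finite_subset by blast
  have "(if t < OS l I \<omega> then 1 else (0::real)) = (if card {i\<in>I. Xs i \<omega> \<le> t} < l then 1 else 0)"
    using ord_stat_le_iff[OF fI I(2,3), of "\<lambda>i. Xs i \<omega>" t] unfolding OS_def by auto
  also have "\<dots> = (\<Sum>J\<in>{J. J \<subseteq> I \<and> card J < l}. \<Prod>i<n. indJ I J t i (Xs i \<omega>))"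
    by (rule indicator_decomp[OF _ I(1)]) simp
  finally have e1: "(if t < OS l I \<omega> then 1 else (0::real)) = (\<Sum>J\<in>{J. J \<subseteq> I \<and> card J < l}. \<Prod>i<n. indJ I J t i (Xs i \<omega>))" .
  have e2: "exp (- z * S \<omega>) = (\<Prod>i<n. exp (- z * Xs i \<omega>))"
  proof -
    have "- z * S \<omega> = (\<Sum>i<n. - z * Xs i \<omega>)" unfolding S_def by (simp add: sum_distrib_left)
    then show ?thesis by (simp add: exp_sum)
  qed
  show ?thesis unfolding e1 e2 sum_distrib_right gJ_def prod.distrib ..
qed

lemma E_ind_exp:
  assumes I: "I \<subseteq> {..<n}" "card I = m" and l: "1 \<le> l" "l \<le> m" and z: "0 < z"
  shows "(\<integral>\<omega>. (if t < OS l I \<omega> then 1 else 0) * exp (- z * S \<omega>) \<partial>M)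
      = (\<Sum>i<l. real (m choose i) * At t z ^ i * (Lz z - At t z) ^ (m - i)) * Lz z ^ (n - m)"
    and "integrable M (\<lambda>\<omega>. (if t < OS l I \<omega> then 1 else 0) * exp (- z * S \<omega>))"
proof -
  have fI: "finite I" using I finite_subset by blast
  let ?J = "{J. J \<subseteq> I \<and> card J < l}"
  have fJ: "finite ?J" using fI by simp
  have pw: "(\<lambda>\<omega>. (if t < OS l I \<omega> then 1 else 0) * exp (- z * S \<omega>))
      = (\<lambda>\<omega>. \<Sum>J\<in>?J. \<Prod>i<n. gJ I J t z i (Xs i \<omega>))"
    using pointwise_decomp[OF I(1) l(1)] l I by auto
  have intJ: "integrable M (\<lambda>\<omega>. \<Prod>i<n. gJ I J t z i (Xs i \<omega>))" if "J \<in> ?J" for J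
    using prod_exp(2)[of J I z t] that I z by auto
  show "integrable M (\<lambda>\<omega>. (if t < OS l I \<omega> then 1 else 0) * exp (- z * S \<omega>))"
    unfolding pw by (rule Bochner_Integration.integrable_sum) (use intJ in auto)
  have "(\<integral>\<omega>. (if t < OS l I \<omega> then 1 else 0) * exp (- z * S \<omega>) \<partial>M)
      = (\<Sum>J\<in>?J. \<integral>\<omega>. (\<Prod>i<n. gJ I J t z i (Xs i \<omega>)) \<partial>M)"
    unfolding pw by (rule Bochner_Integration.integral_sum) (use intJ in auto)
  also have "\<dots> = (\<Sum>J\<in>?J. At t z ^ card J * (Lz z - At t z) ^ (m - card J) * Lz z ^ (n - m))"
    using prod_exp(1)[of _ I z t] I z by (intro sum.cong) auto
  also have "\<dots> = (\<Sum>i<l. real (card I choose i) * (At t z ^ i * (Lz z - At t z) ^ (m - i) * Lz z ^ (n - m)))"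
    by (rule sum_subsets_by_card[OF fI])
  also have "\<dots> = (\<Sum>i<l. real (m choose i) * At t z ^ i * (Lz z - At t z) ^ (m - i)) * Lz z ^ (n - m)"
    unfolding I(2) sum_distrib_right by (simp add: mult_ac)
  finally show "(\<integral>\<omega>. (if t < OS l I \<omega> then 1 else 0) * exp (- z * S \<omega>) \<partial>M)
      = (\<Sum>i<l. real (m choose i) * At t z ^ i * (Lz z - At t z) ^ (m - i)) * Lz z ^ (n - m)" .
qed

end

lemma set_integrable_sum':
  fixes f :: "'i \<Rightarrow> real \<Rightarrow> real"
  assumes "\<And>r. r \<in> R \<Longrightarrow> set_integrable lborel A (f r)"
  shows "set_integrable lborel A (\<lambda>x. \<Sum>r\<in>R. f r x)"
  using assms unfolding set_integrable_def scaleR_sum_right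
  by (intro Bochner_Integration.integrable_sum) auto

lemma set_integral_sum':
  fixes f :: "'i \<Rightarrow> real \<Rightarrow> real"
  assumes "\<And>r. r \<in> R \<Longrightarrow> set_integrable lborel A (f r)"
  shows "(LINT x:A|lborel. (\<Sum>r\<in>R. f r x)) = (\<Sum>r\<in>R. (LINT x:A|lborel. f r x))"
  using assms unfolding set_integrable_def set_lebesgue_integral_def scaleR_sum_right
  by (intro Bochner_Integration.integral_sum) auto

lemma nn_set_integral_eq:
  fixes f :: "real \<Rightarrow> real"
  assumes "set_integrable lborel A f" "\<And>x. x \<in> A \<Longrightarrow> 0 \<le> f x"
  shows "(\<integral>\<^sup>+x. ennreal (indicator A x * f x) \<partial>lborel) = ennreal (LINT x:A|lborel. f x)"
proof -
  have "(\<integral>\<^sup>+x. ennreal (indicator A x * f x) \<partial>lborel) = (\<integral>\<^sup>+x. ennreal (indicator A x *\<^sub>R f x) \<partial>lborel)"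
    by simp
  also have "\<dots> = ennreal (LINT x:A|lborel. f x)"
    unfolding set_lebesgue_integral_def
    by (rule nn_integral_eq_integral) (use assms in \<open>auto simp: set_integrable_def indicator_def\<close>)
  finally show ?thesis .
qed

lemma nn_exp_integral:
  assumes "0 < (u::real)"
  shows "(\<integral>\<^sup>+z. ennreal (indicator {0<..} z * exp (- z * u)) \<partial>lborel) = ennreal (1 / u)"
proof -
  have "(\<integral>\<^sup>+z. ennreal (indicator {0<..} z * exp (- z * u)) \<partial>lborel) = ennreal (LINT z:{0<..}|lborel. exp (- (z * u)))"
    using nn_set_integral_eq[OF integrable_I0i_exp_mscale[OF assms]] by simp
  also have "(LINT z:{0<..}|lborel. exp (- (z * u))) = 1 / u"
    using LBINT_I0i_exp_mscale[OF assms] by (simp add: interval_lebesgue_integral_0_infty)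
  finally show ?thesis .
qed

context gsetup begin

definition cc :: "nat \<Rightarrow> nat \<Rightarrow> real" where
  "cc l r = (-1)^(r-l) * real ((r-1) choose (l-1)) * real (m choose r)"

definition G :: "nat \<Rightarrow> real \<Rightarrow> real \<Rightarrow> real" where
  "G l t z = (\<Sum>i<l. real (m choose i) * At t z ^ i * (Lz z - At t z) ^ (m - i)) * Lz z ^ (n - m)"

lemma G_nonneg: "0 < z \<Longrightarrow> 0 \<le> G l t z"
  unfolding G_def using At_nonneg LA_nonneg Lz_nonneg
  by (intro mult_nonneg_nonneg sum_nonneg zero_le_power) auto

lemma G_eq:
  assumes "1 \<le> l" "l \<le> m"
  shows "G l t z = (\<Sum>r=l..m. cc l r * (Lz z ^ (n - r) * (Lz z ^ r - At t z ^ r)))"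
proof -
  have "G l t z = (\<Sum>r=l..m. cc l r * (((At t z + (Lz z - At t z))^r - At t z^r) * (At t z + (Lz z - At t z))^(m-r))) * Lz z ^ (n - m)"
    unfolding G_def cc_def using tail_identity[OF assms, of "At t z" "Lz z - At t z"] by (simp add: mult_ac)
  also have "\<dots> = (\<Sum>r=l..m. cc l r * (((At t z + (Lz z - At t z))^r - At t z^r) * (At t z + (Lz z - At t z))^(m-r)) * Lz z ^ (n - m))"
    by (rule sum_distrib_right)
  also have "\<dots> = (\<Sum>r=l..m. cc l r * (Lz z ^ (n - r) * (Lz z ^ r - At t z ^ r)))"
  proof (rule sum.cong[OF refl])
    fix r assume r: "r \<in> {l..m}"
    have "Lz z ^ (m - r) * Lz z ^ (n - m) = Lz z ^ (n - r)"
      using r mn by (simp flip: power_add)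
    then show "cc l r * (((At t z + (Lz z - At t z))^r - At t z^r) * (At t z + (Lz z - At t z))^(m-r)) * Lz z ^ (n - m)
        = cc l r * (Lz z ^ (n - r) * (Lz z ^ r - At t z ^ r))"
      by (simp add: mult_ac)
  qed
  finally show ?thesis .
qed

lemma G_int:
  assumes "j \<le> l" "l \<le> m" "0 < z"
  shows "set_integrable lborel {0..} (\<lambda>t. G l t z)"
    and "(LBINT t:{0..}. G l t z) = (\<Sum>r=l..m. cc l r * ((LBINT t:{0..}. Lz z ^ r - At t z ^ r) * Lz z ^ (n - r)))"
proof -
  have l1: "1 \<le> l" using assms j1 by simp
  have int: "set_integrable lborel {0..} (\<lambda>t. cc l r * (Lz z ^ (n - r) * (Lz z ^ r - At t z ^ r)))"
    if "r \<in> {l..m}" for r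
  proof -
    have "set_integrable lborel {0..} (\<lambda>t. Lz z ^ r - At t z ^ r)"
      using int_t[of r z] that assms unfolding Lz_def At_def by auto
    then show ?thesis by (intro set_integrable_mult_right)
  qed
  show "set_integrable lborel {0..} (\<lambda>t. G l t z)"
    unfolding G_eq[OF l1 assms(2)] by (rule set_integrable_sum') (use int in auto)
  show "(LBINT t:{0..}. G l t z) = (\<Sum>r=l..m. cc l r * ((LBINT t:{0..}. Lz z ^ r - At t z ^ r) * Lz z ^ (n - r)))"
    unfolding G_eq[OF l1 assms(2)] by (subst set_integral_sum') (use int in \<open>auto simp: mult_ac\<close>)
qed

definition H :: "nat \<Rightarrow> real \<Rightarrow> real" where
  "H l z = (\<Sum>r=l..m. cc l r * ((LBINT t:{0..}. Lz z ^ r - At t z ^ r) * Lz z ^ (n - r)))"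

lemma H_int:
  assumes "j \<le> l" "l \<le> m"
  shows "set_integrable lborel {0<..} (H l)"
    and "(LBINT z:{0<..}. H l z) = (\<Sum>r=l..m. cc l r * (LBINT z:{0<..}. (LBINT t:{0..}. Lz z ^ r - At t z ^ r) * Lz z ^ (n - r)))"
proof -
  have int: "set_integrable lborel {0<..} (\<lambda>z. cc l r * ((LBINT t:{0..}. Lz z ^ r - At t z ^ r) * Lz z ^ (n - r)))"
    if "r \<in> {l..m}" for r
  proof -
    have "set_integrable lborel {0<..} (\<lambda>z. (LBINT t:{0..}. Lz z ^ r - At t z ^ r) * Lz z ^ (n - r))"
      using int_z[of r] that assms unfolding Lz_def At_def by auto
    then show ?thesis by (intro set_integrable_mult_right)
  qed
  show "set_integrable lborel {0<..} (H l)"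
    unfolding H_def by (rule set_integrable_sum') (use int in auto)
  show "(LBINT z:{0<..}. H l z) = (\<Sum>r=l..m. cc l r * (LBINT z:{0<..}. (LBINT t:{0..}. Lz z ^ r - At t z ^ r) * Lz z ^ (n - r)))"
    unfolding H_def by (subst set_integral_sum') (use int in auto)
qed

lemma H_nonneg:
  assumes "j \<le> l" "l \<le> m" "0 < z"
  shows "0 \<le> H l z"
proof -
  have "H l z = (LBINT t:{0..}. G l t z)" unfolding H_def using G_int(2)[OF assms] by simp
  also have "\<dots> \<ge> 0" unfolding set_lebesgue_integral_def
    using G_nonneg[OF assms(3)] by (intro integral_nonneg_AE) (auto simp: indicator_def)
  finally show ?thesis .
qed

end

context gsetup begin

lemma psf: "pair_sigma_finite lborel M"
  by (rule pair_sigma_finite.intro) (fact lborel.sigma_finite_measure_axioms, fact sigma_finite_measure_axioms)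

lemma main_E:
  assumes I: "I \<subseteq> {..<n}" "card I = m" and l: "j \<le> l" "l \<le> m"
  shows "(\<integral>\<omega>. OS l I \<omega> / S \<omega> \<partial>M) = (LBINT z:{0<..}. H l z)"
proof -
  have l1: "1 \<le> l" using l j1 by simp
  have fI: "finite I" using I finite_subset by blast
  have OSm[measurable]: "OS l I \<in> borel_measurable M" using OS_meas[OF I(1) l1] I l by simp
  define F where "F \<omega> t z = ennreal (indicator {0<..} z * indicator {0..} t * ((if t < OS l I \<omega> then 1 else 0) * exp (- z * S \<omega>)))" for \<omega> t z
  interpret P: pair_sigma_finite lborel M by (rule psf)
  have OS_nn: "0 \<le> OS l I \<omega>" if "\<forall>i\<in>{..<n}. Xs i \<omega> \<ge> 0" for \<omega>
  proof -
    have "OS l I \<omega> \<in> (\<lambda>i. Xs i \<omega>) ` I" unfolding OS_def using ord_stat_mem[OF fI l1] I l by simp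
    then show ?thesis using that I by auto
  qed
  have OS_le: "OS l I \<omega> \<le> S \<omega>" if "\<forall>i\<in>{..<n}. Xs i \<omega> \<ge> 0" for \<omega>
  proof -
    obtain i where i: "i \<in> I" "OS l I \<omega> = Xs i \<omega>"
      using ord_stat_mem[OF fI l1, of "\<lambda>i. Xs i \<omega>"] I l unfolding OS_def by auto
    have "Xs i \<omega> \<le> S \<omega>" unfolding S_def using that i I by (intro member_le_sum) auto
    then show ?thesis using i by simp
  qed
  have s1: "(\<integral>\<omega>. OS l I \<omega> / S \<omega> \<partial>M) = enn2real (\<integral>\<^sup>+\<omega>. ennreal (OS l I \<omega> / S \<omega>) \<partial>M)"
  proof (rule integral_eq_nn_integral)
    show "(\<lambda>\<omega>. OS l I \<omega> / S \<omega>) \<in> borel_measurable M" by measurable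
    show "AE \<omega> in M. 0 \<le> OS l I \<omega> / S \<omega>"
      using AE_good by eventually_elim (use OS_nn in auto)
  qed
  have s2: "(\<integral>\<^sup>+\<omega>. ennreal (OS l I \<omega> / S \<omega>) \<partial>M) = (\<integral>\<^sup>+\<omega>. (\<integral>\<^sup>+z. (\<integral>\<^sup>+t. F \<omega> t z \<partial>lborel) \<partial>lborel) \<partial>M)"
  proof (rule nn_integral_cong_AE)
    show "AE \<omega> in M. ennreal (OS l I \<omega> / S \<omega>) = (\<integral>\<^sup>+z. (\<integral>\<^sup>+t. F \<omega> t z \<partial>lborel) \<partial>lborel)"
      using AE_good
    proof eventually_elim
      case (elim \<omega>)
      define Ov where "Ov = OS l I \<omega>"
      have Ov0: "0 \<le> Ov" using OS_nn elim Ov_def by auto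
      have Spos: "0 < S \<omega>" using elim by auto
      have inner: "(\<integral>\<^sup>+t. F \<omega> t z \<partial>lborel) = ennreal (indicator {0<..} z * exp (- z * S \<omega>)) * ennreal Ov" for z
      proof -
        have "(\<integral>\<^sup>+t. F \<omega> t z \<partial>lborel) = (\<integral>\<^sup>+t. ennreal (indicator {0<..} z * exp (- z * S \<omega>)) * indicator {0..<Ov} t \<partial>lborel)"
          unfolding F_def Ov_def by (intro nn_integral_cong) (auto simp: indicator_def)
        also have "\<dots> = ennreal (indicator {0<..} z * exp (- z * S \<omega>)) * emeasure lborel {0..<Ov}"
          by (rule nn_integral_cmult_indicator) simp
        also have "\<dots> = ennreal (indicator {0<..} z * exp (- z * S \<omega>)) * ennreal Ov"
          using Ov0 by simp
        finally show ?thesis .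
      qed
      have "(\<integral>\<^sup>+z. (\<integral>\<^sup>+t. F \<omega> t z \<partial>lborel) \<partial>lborel)
          = (\<integral>\<^sup>+z. ennreal (indicator {0<..} z * exp (- z * S \<omega>)) * ennreal Ov \<partial>lborel)"
        unfolding inner ..
      also have "\<dots> = (\<integral>\<^sup>+z. ennreal (indicator {0<..} z * exp (- z * S \<omega>)) \<partial>lborel) * ennreal Ov"
        by (rule nn_integral_multc) measurable
      also have "\<dots> = ennreal (1 / S \<omega>) * ennreal Ov"
        using nn_exp_integral[OF Spos] by simp
      also have "\<dots> = ennreal (Ov / S \<omega>)"
        using Ov0 Spos by (simp add: ennreal_mult''[symmetric] divide_inverse mult.commute)
      finally show ?case unfolding Ov_def by simp
    qed
  qed
  have s3: "(\<integral>\<^sup>+\<omega>. (\<integral>\<^sup>+z. (\<integral>\<^sup>+t. F \<omega> t z \<partial>lborel) \<partial>lborel) \<partial>M)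
      = (\<integral>\<^sup>+z. (\<integral>\<^sup>+\<omega>. (\<integral>\<^sup>+t. F \<omega> t z \<partial>lborel) \<partial>M) \<partial>lborel)"
    by (rule P.Fubini') (unfold F_def, measurable)
  have s45: "(\<integral>\<^sup>+\<omega>. (\<integral>\<^sup>+t. F \<omega> t z \<partial>lborel) \<partial>M) = (\<integral>\<^sup>+t. ennreal (indicator {0<..} z * indicator {0..} t * G l t z) \<partial>lborel)" for z
  proof -
    have "(\<integral>\<^sup>+\<omega>. (\<integral>\<^sup>+t. F \<omega> t z \<partial>lborel) \<partial>M) = (\<integral>\<^sup>+t. (\<integral>\<^sup>+\<omega>. F \<omega> t z \<partial>M) \<partial>lborel)"
      by (rule P.Fubini') (unfold F_def, measurable)
    also have "\<dots> = (\<integral>\<^sup>+t. ennreal (indicator {0<..} z * indicator {0..} t * G l t z) \<partial>lborel)"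
    proof (rule nn_integral_cong)
      fix t
      show "(\<integral>\<^sup>+\<omega>. F \<omega> t z \<partial>M) = ennreal (indicator {0<..} z * indicator {0..} t * G l t z)"
      proof (cases "0 < z")
        case True
        let ?g = "\<lambda>\<omega>. (if t < OS l I \<omega> then 1 else 0) * exp (- z * S \<omega>)"
        have ig: "integrable M ?g" using E_ind_exp(2)[OF I l1 l(2) True] .
        have "(\<integral>\<^sup>+\<omega>. F \<omega> t z \<partial>M) = ennreal (\<integral>\<omega>. indicator {0<..} z * indicator {0..} t * ?g \<omega> \<partial>M)"
          unfolding F_def
          by (rule nn_integral_eq_integral) (use ig in \<open>auto simp: indicator_def\<close>)
        also have "(\<integral>\<omega>. indicator {0<..} z * indicator {0..} t * ?g \<omega> \<partial>M) = indicator {0<..} z * indicator {0..} t * G l t z"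
          using E_ind_exp(1)[OF I l1 l(2) True, of t] unfolding G_def by simp
        finally show ?thesis .
      next
        case False
        then show ?thesis unfolding F_def by (simp add: indicator_def)
      qed
    qed
    finally show ?thesis .
  qed
  have s6: "(\<integral>\<^sup>+t. ennreal (indicator {0<..} z * indicator {0..} t * G l t z) \<partial>lborel) = ennreal (indicator {0<..} z * H l z)" for z
  proof (cases "0 < z")
    case True
    have "(\<integral>\<^sup>+t. ennreal (indicator {0<..} z * indicator {0..} t * G l t z) \<partial>lborel)
        = (\<integral>\<^sup>+t. ennreal (indicator {0..} t * G l t z) \<partial>lborel)" using True by simp
    also have "\<dots> = ennreal (LBINT t:{0..}. G l t z)"
      by (rule nn_set_integral_eq[OF G_int(1)[OF l True]]) (use G_nonneg True in auto)
    also have "\<dots> = ennreal (indicator {0<..} z * H l z)"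
      using G_int(2)[OF l True] True unfolding H_def by simp
    finally show ?thesis .
  next
    case False
    then show ?thesis by (simp add: indicator_def)
  qed
  have s7: "(\<integral>\<^sup>+z. ennreal (indicator {0<..} z * H l z) \<partial>lborel) = ennreal (LBINT z:{0<..}. H l z)"
    by (rule nn_set_integral_eq[OF H_int(1)[OF l]]) (use H_nonneg l in auto)
  have Hnn: "0 \<le> (LBINT z:{0<..}. H l z)" unfolding set_lebesgue_integral_def
    using H_nonneg[OF l] by (intro integral_nonneg_AE) (auto simp: indicator_def)
  show ?thesis
    unfolding s1 s2 s3 s45 s6 s7 using Hnn by simp
qed

end

lemma prod_fact_aux:
  "d + 1 \<le> n \<Longrightarrow> (\<Prod>i\<in>{1..d}. real (n - i)) * fact (n - (d + 1)) = fact (n - 1)"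
proof (induction d)
  case 0
  then show ?case by simp
next
  case (Suc d)
  have IH: "(\<Prod>i\<in>{1..d}. real (n - i)) * fact (n - (d + 1)) = fact (n - 1)" using Suc by simp
  have e1: "(\<Prod>i\<in>{1..Suc d}. real (n - i)) = (\<Prod>i\<in>{1..d}. real (n - i)) * real (n - Suc d)"
    by (simp add: prod.nat_ivl_Suc')
  have e2: "fact (n - (d + 1)) = real (n - Suc d) * (fact (n - (Suc d + 1)) :: real)"
  proof -
    have "n - (d + 1) = Suc (n - (Suc d + 1))" using Suc.prems by simp
    then show ?thesis by (simp add: fact_Suc)
  qed
  show ?case using IH unfolding e1 e2 by (simp add: mult_ac)
qed

lemma const_eq:
  assumes "1 \<le> m" "m \<le> n"
  shows "fact (m - 1) / (\<Prod>i\<in>{1..m-1}. real (n - i)) * real (n choose m) = real n / real m"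
proof -
  define P where "P = (\<Prod>i\<in>{1..m-1}. real (n - i))"
  have P: "P * fact (n - m) = fact (n - 1)" unfolding P_def using prod_fact_aux[of "m - 1" n] assms by simp
  have fn: "(fact n :: real) = real n * fact (n - 1)" using assms by (intro fact_reduce) simp
  have fm: "(fact m :: real) = real m * fact (m - 1)" using assms by (intro fact_reduce) simp
  have Pnz: "P \<noteq> 0" using P by (metis fact_nonzero mult_eq_0_iff)
  have "real (n choose m) = fact n / (fact m * fact (n - m))" using binomial_fact[OF assms(2)] by simp
  then have "fact (m - 1) / P * real (n choose m) = fact (m - 1) * (real n * fact (n - 1)) / (P * (real m * fact (m - 1)) * fact (n - m))"
    unfolding fn fm by (simp add: field_simps)
  also have "\<dots> = real n * fact (n - 1) / (real m * (P * fact (n - m)))"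
    by (simp add: field_simps)
  also have "\<dots> = real n / real m" unfolding P by simp
  finally show ?thesis unfolding P_def .
qed

context gsetup begin

lemma OS_div_integrable:
  assumes I: "I \<subseteq> {..<n}" "card I = m" and l: "1 \<le> l" "l \<le> m"
  shows "integrable M (\<lambda>\<omega>. OS l I \<omega> / S \<omega>)"
proof (rule bounded_integrable)
  have fI: "finite I" using I finite_subset by blast
  have OSm[measurable]: "OS l I \<in> borel_measurable M" using OS_meas[OF I(1) l(1)] I l by simp
  show "(\<lambda>\<omega>. OS l I \<omega> / S \<omega>) \<in> borel_measurable M" by measurable
  show "AE \<omega> in M. \<bar>OS l I \<omega> / S \<omega>\<bar> \<le> 1"
    using AE_good
  proof eventually_elim
    case (elim \<omega>)
    obtain i where i: "i \<in> I" "OS l I \<omega> = Xs i \<omega>"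
      using ord_stat_mem[OF fI l(1), of "\<lambda>i. Xs i \<omega>"] I l unfolding OS_def by auto
    have "Xs i \<omega> \<le> S \<omega>" unfolding S_def using elim i I by (intro member_le_sum) auto
    moreover have "0 \<le> Xs i \<omega>" using elim i I by auto
    ultimately show ?case using i elim by auto
  qed
qed

end

theorem theorem1:
  fixes M :: "'a measure" and X :: "'a \<Rightarrow> real" and Xs :: "nat \<Rightarrow> 'a \<Rightarrow> real"
    and n m j k :: nat
  assumes "prob_space M"
    and "X \<in> borel_measurable M"
    and "AE \<omega> in M. X \<omega> \<ge> 0"
    and "absolutely_continuous lborel (distr M borel X)"
    and "integrable M X" and "(\<integral>\<omega>. X \<omega> \<partial>M) > 0"
    and "2 \<le> m" and "m \<le> n"
    and "\<And>i. i < n \<Longrightarrow> Xs i \<in> borel_measurable M"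
    and "\<And>i. i < n \<Longrightarrow> distr M borel (Xs i) = distr M borel X"
    and "prob_space.indep_vars M (\<lambda>_. borel) Xs {..<n}"
    and "1 \<le> j" and "j \<le> k" and "k \<le> m"
    and "integrable M (\<lambda>\<omega>. IG_hat n m j k (\<lambda>i. Xs i \<omega>))"
    and "\<And>r z. r \<in> {j..m} \<Longrightarrow> z > 0 \<Longrightarrow>
           set_integrable lborel {0..}
             (\<lambda>t. laplace_tr M X z ^ r - trunc_laplace M X t z ^ r)"
    and "\<And>r. r \<in> {j..m} \<Longrightarrow>
           set_integrable lborel {0<..}
             (\<lambda>z. (LBINT t:{0..}. laplace_tr M X z ^ r - trunc_laplace M X t z ^ r)
                   * laplace_tr M X z ^ (n - r))"
  shows "(\<integral>\<omega>. IG_hat n m j k (\<lambda>i. Xs i \<omega>) \<partial>M) =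
     real n / real m * (\<Sum>r=k..m. (-1::real) ^ (r - k) * real ((r - 1) choose (k - 1))
        * real (m choose r) *
        (LBINT z:{0<..}. (LBINT t:{0..}. laplace_tr M X z ^ r - trunc_laplace M X t z ^ r)
                   * laplace_tr M X z ^ (n - r)))
   - real n / real m * (\<Sum>s=j..m. (-1::real) ^ (s - j) * real ((s - 1) choose (j - 1))
        * real (m choose s) *
        (LBINT z:{0<..}. (LBINT t:{0..}. laplace_tr M X z ^ s - trunc_laplace M X t z ^ s)
                   * laplace_tr M X z ^ (n - s)))"
proof -
  interpret gsetup M X Xs n m j
  proof (intro gsetup.intro gsetup_axioms.intro)
    show "j \<le> m" using assms(13,14) by linarith
  qed (fact assms)+
  define \<I> where "\<I> = {I. I \<subseteq> {..<n} \<and> card I = m}"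
  define c where "c = fact (m - 1) / (\<Prod>i\<in>{1..m-1}. real (n - i))"
  have fin: "finite \<I>" unfolding \<I>_def by simp
  have cardI: "card \<I> = n choose m" unfolding \<I>_def using n_subsets[of "{..<n}" m] by simp
  have pw: "IG_hat n m j k (\<lambda>i. Xs i \<omega>) = c * (\<Sum>I\<in>\<I>. OS k I \<omega> / S \<omega> - OS j I \<omega> / S \<omega>)" for \<omega>
    unfolding IG_hat_def c_def \<I>_def OS_def S_def
    by (simp add: sum_divide_distrib diff_divide_distrib)
  have kj: "j \<le> k" "k \<le> m" "1 \<le> k" using assms by auto
  have intk: "integrable M (\<lambda>\<omega>. OS k I \<omega> / S \<omega>)" and intj: "integrable M (\<lambda>\<omega>. OS j I \<omega> / S \<omega>)"
    if "I \<in> \<I>" for I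
    using OS_div_integrable[of I k] OS_div_integrable[of I j] that kj j1 jm unfolding \<I>_def by auto
  have "(\<integral>\<omega>. IG_hat n m j k (\<lambda>i. Xs i \<omega>) \<partial>M) = c * (\<Sum>I\<in>\<I>. (\<integral>\<omega>. OS k I \<omega> / S \<omega> \<partial>M) - (\<integral>\<omega>. OS j I \<omega> / S \<omega> \<partial>M))"
    unfolding pw
    by (subst integral_mult_right_zero, subst Bochner_Integration.integral_sum)
       (use intk intj in \<open>auto intro!: sum.cong simp: Bochner_Integration.integral_diff\<close>)
  also have "\<dots> = c * (\<Sum>I\<in>\<I>. (LBINT z:{0<..}. H k z) - (LBINT z:{0<..}. H j z))"
    using main_E[of _ k] main_E[of _ j] kj jm unfolding \<I>_def by (intro arg_cong[where f="\<lambda>x. c * x"] sum.cong) auto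
  also have "\<dots> = c * real (n choose m) * ((LBINT z:{0<..}. H k z) - (LBINT z:{0<..}. H j z))"
    using cardI by simp
  also have "c * real (n choose m) = real n / real m"
    unfolding c_def using const_eq[of m n] assms by simp
  also have "(LBINT z:{0<..}. H k z) = (\<Sum>r=k..m. cc k r * (LBINT z:{0<..}. (LBINT t:{0..}. Lz z ^ r - At t z ^ r) * Lz z ^ (n - r)))"
    using H_int(2)[of k] kj by simp
  also have "(LBINT z:{0<..}. H j z) = (\<Sum>r=j..m. cc j r * (LBINT z:{0<..}. (LBINT t:{0..}. Lz z ^ r - At t z ^ r) * Lz z ^ (n - r)))"
    using H_int(2)[of j] jm by simp
  finally show ?thesis unfolding cc_def Lz_def At_def by (simp add: right_diff_distrib)
qed

end
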